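(* Let $X$ be a transient random walk on $\mathbf{Z}^d$ and $U(A):=\sum_{x\in A\cap\mathbf{Z}^d}g(0,x)$. Then $$\gamma_c=\limsup_{n\to\infty}n^{-1}\log_2U(\mathcal{V}_n),$$ where $\gamma_c:=\inf\{\gamma\in(0,d):\sum_{x\in\mathbf{Z}^d\setminus\{0\}}g(0,x)\|x\|^{-\gamma}<\infty\}$ with $\inf\varnothing:=d$.
   Context: A random walk on $\mathbf{Z}^d$ is $X_n=X_0+\xi_1+\cdots+\xi_n$ with $\xi_1,\xi_2,\dots$ i.i.d. $\mathbf{Z}^d$-valued; $P^a$ denotes its law when $X_0=a$. Its Green function is $g(a,x):=\sum_{n\ge0}P^a\{X_n=x\}$, and transience means $g$ is finite. For $k\ge0$, $\mathcal{V}_k:=[-2^k,2^k)^d$. $\|\cdot\|$ is the Euclidean norm. *)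

theory Defs
  imports "HOL-Probability.Probability"
begin

text \<open>Points of Z^d are integer vectors indexed by a finite type 'd (so d = CARD('d)). The law of X_n under P^0
  is the n-fold convolution of the step distribution.\<close>

primrec walk_law :: "(int ^ 'd) pmf \<Rightarrow> nat \<Rightarrow> (int ^ 'd) pmf" where
  "walk_law \<xi> 0 = return_pmf 0"
| "walk_law \<xi> (Suc n) = bind_pmf (walk_law \<xi> n) (\<lambda>x. map_pmf (\<lambda>s. x + s) \<xi>)"

definition walk_law_from :: "(int ^ 'd) pmf \<Rightarrow> int ^ 'd \<Rightarrow> nat \<Rightarrow> (int ^ 'd) pmf" where
  "walk_law_from \<xi> a n = map_pmf (\<lambda>y. a + y) (walk_law \<xi> n)"

definition green :: "(int ^ 'd) pmf \<Rightarrow> int ^ 'd \<Rightarrow> int ^ 'd \<Rightarrow> ennreal" where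
  "green \<xi> a x = (\<Sum>n. ennreal (pmf (walk_law_from \<xi> a n) x))"

definition transient :: "(int ^ 'd) pmf \<Rightarrow> bool" where
  "transient \<xi> \<longleftrightarrow> (\<forall>a x. green \<xi> a x \<noteq> \<infinity>)"

definition Ufun :: "(int ^ 'd) pmf \<Rightarrow> (int ^ 'd) set \<Rightarrow> ennreal" where
  "Ufun \<xi> A = (\<Sum>\<^sub>\<infinity>x\<in>A. green \<xi> 0 x)"

definition Vbox :: "nat \<Rightarrow> (int ^ 'd) set" where
  "Vbox k = {x. \<forall>i. - (2 ^ k) \<le> x $ i \<and> x $ i < 2 ^ k}"

definition znorm :: "int ^ 'd \<Rightarrow> real" where
  "znorm x = norm (\<chi> i. real_of_int (x $ i))"

definition gamma_c :: "(int ^ 'd) pmf \<Rightarrow> real" where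
  "gamma_c \<xi> = (let S = {\<gamma> \<in> {0<..<real CARD('d)}.
       (\<Sum>\<^sub>\<infinity>x\<in>UNIV - {0}. green \<xi> 0 x * ennreal (znorm x powr (- \<gamma>))) < \<infinity>}
     in if S = {} then real CARD('d) else Inf S)"

end

theory Submission
  imports Defs
begin


lemma wlf_Suc:
  "walk_law_from \<xi> a (Suc n) = bind_pmf (walk_law_from \<xi> a n) (\<lambda>z. map_pmf (\<lambda>s. z + s) \<xi>)"
  unfolding walk_law_from_def
  by (simp add: map_bind_pmf bind_map_pmf pmf.map_comp o_def add.assoc[symmetric])

lemma pmf_shift: fixes \<xi> :: "(int^'d) pmf" shows "pmf (map_pmf (\<lambda>s. z + s) \<xi>) y = pmf \<xi> (y - z)"
proof -
  have "pmf (map_pmf (\<lambda>s. z + s) \<xi>) (z + (y - z)) = pmf \<xi> (y - z)"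
    by (rule pmf_map_inj') (simp add: inj_def)
  then show ?thesis by simp
qed

lemma wlf_step:
  "ennreal (pmf (walk_law_from \<xi> a (Suc n)) y)
    = (\<integral>\<^sup>+z. ennreal (pmf (walk_law_from \<xi> a n) z) * ennreal (pmf \<xi> (y - z)) \<partial>count_space UNIV)"
  unfolding wlf_Suc ennreal_pmf_bind nn_integral_measure_pmf pmf_shift ..

lemma wlf_0: "pmf (walk_law_from \<xi> a 0) y = (if y = a then 1 else 0)"
  unfolding walk_law_from_def by (simp add: pmf_return)

lemma wlf_diag: "pmf (walk_law_from \<xi> x n) x = pmf (walk_law_from \<xi> 0 n) 0"
proof -
  have "pmf (walk_law_from \<xi> x n) (x + 0) = pmf (walk_law \<xi> n) 0"
    unfolding walk_law_from_def by (rule pmf_map_inj') (simp add: inj_def)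
  moreover have "pmf (walk_law_from \<xi> 0 n) (0 + 0) = pmf (walk_law \<xi> n) 0"
    unfolding walk_law_from_def by (rule pmf_map_inj') (simp add: inj_def)
  ultimately show ?thesis by simp
qed

primrec avoid :: "(int^'d) pmf \<Rightarrow> int^'d \<Rightarrow> nat \<Rightarrow> int^'d \<Rightarrow> ennreal" where
  "avoid \<xi> x 0 y = (if y = 0 \<and> y \<noteq> x then 1 else 0)"
| "avoid \<xi> x (Suc n) y = (if y \<noteq> x then \<integral>\<^sup>+z. avoid \<xi> x n z * ennreal (pmf \<xi> (y - z)) \<partial>count_space UNIV else 0)"

primrec fhit :: "(int^'d) pmf \<Rightarrow> int^'d \<Rightarrow> nat \<Rightarrow> ennreal" where
  "fhit \<xi> x 0 = (if x = 0 then 1 else 0)"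
| "fhit \<xi> x (Suc n) = (\<integral>\<^sup>+z. avoid \<xi> x n z * ennreal (pmf \<xi> (x - z)) \<partial>count_space UNIV)"

lemma decomp:
  "ennreal (pmf (walk_law_from \<xi> 0 n) y) = avoid \<xi> x n y
     + (\<Sum>k\<le>n. fhit \<xi> x k * ennreal (pmf (walk_law_from \<xi> x (n - k)) y))"
proof (induction n arbitrary: y)
  case 0
  then show ?case by (auto simp: wlf_0)
next
  case (Suc n)
  define K where "K z = ennreal (pmf \<xi> (y - z))" for z
  have "ennreal (pmf (walk_law_from \<xi> 0 (Suc n)) y)
     = (\<integral>\<^sup>+z. (avoid \<xi> x n z + (\<Sum>k\<le>n. fhit \<xi> x k * ennreal (pmf (walk_law_from \<xi> x (n - k)) z))) * K z \<partial>count_space UNIV)"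
    unfolding wlf_step Suc K_def ..
  also have "\<dots> = (\<integral>\<^sup>+z. avoid \<xi> x n z * K z \<partial>count_space UNIV)
      + (\<integral>\<^sup>+z. (\<Sum>k\<le>n. fhit \<xi> x k * (ennreal (pmf (walk_law_from \<xi> x (n - k)) z) * K z)) \<partial>count_space UNIV)"
    by (subst nn_integral_add[symmetric]) (auto simp: distrib_right sum_distrib_right mult.assoc)
  also have "(\<integral>\<^sup>+z. (\<Sum>k\<le>n. fhit \<xi> x k * (ennreal (pmf (walk_law_from \<xi> x (n - k)) z) * K z)) \<partial>count_space UNIV)
      = (\<Sum>k\<le>n. fhit \<xi> x k * ennreal (pmf (walk_law_from \<xi> x (Suc n - k)) y))"
    apply (subst nn_integral_sum, simp)
    apply (rule sum.cong, simp)
    apply (subst nn_integral_cmult, simp)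
    apply (simp add: Suc_diff_le wlf_step K_def)
    done
  also have "(\<integral>\<^sup>+z. avoid \<xi> x n z * K z \<partial>count_space UNIV)
     = avoid \<xi> x (Suc n) y + fhit \<xi> x (Suc n) * ennreal (pmf (walk_law_from \<xi> x 0) y)"
    by (cases "y = x") (auto simp: wlf_0 K_def)
  finally show ?case by (simp add: add.assoc add.commute)
qed

lemma pmf_total: "(\<integral>\<^sup>+y. ennreal (pmf p y) \<partial>count_space UNIV) = 1"
  using measure_pmf.emeasure_space_1[of p] by (simp add: nn_integral_pmf)

lemma fhit_le1:
  "(\<Sum>k\<le>n. fhit \<xi> x k) \<le> 1"
proof -
  have "(\<Sum>k\<le>n. fhit \<xi> x k) = (\<Sum>k\<le>n. fhit \<xi> x k *
          (\<integral>\<^sup>+y. ennreal (pmf (walk_law_from \<xi> x (n - k)) y) \<partial>count_space UNIV))"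
    by (simp add: pmf_total)
  also have "\<dots> = (\<integral>\<^sup>+y. (\<Sum>k\<le>n. fhit \<xi> x k * ennreal (pmf (walk_law_from \<xi> x (n - k)) y)) \<partial>count_space UNIV)"
    by (subst nn_integral_sum) (auto simp: nn_integral_cmult)
  also have "\<dots> \<le> (\<integral>\<^sup>+y. ennreal (pmf (walk_law_from \<xi> 0 n) y) \<partial>count_space UNIV)"
    by (rule nn_integral_mono) (simp add: decomp[of \<xi> n _ x])
  also have "\<dots> = 1" by (rule pmf_total)
  finally show ?thesis .
qed

lemma green_le_diag: "green \<xi> 0 x \<le> green \<xi> 0 0"
proof (cases "x = 0")
  case True then show ?thesis by simp
next
  case False
  define q where "q j = ennreal (pmf (walk_law_from \<xi> 0 j) 0)" for j
  define f where "f k = fhit \<xi> x k" for k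
  have av: "avoid \<xi> x n x = 0" for n using False by (cases n) auto
  have pn: "ennreal (pmf (walk_law_from \<xi> 0 n) x) = (\<Sum>k\<le>n. f k * q (n - k))" for n
    using decomp[of \<xi> n x x] by (simp only: av wlf_diag[of \<xi> x] f_def q_def add_0_left)
  show ?thesis
    unfolding green_def
  proof (rule suminf_le_const, simp)
    fix N
    have "(\<Sum>n<N. ennreal (pmf (walk_law_from \<xi> 0 n) x)) = (\<Sum>n<N. \<Sum>k\<le>n. f k * q (n - k))"
      by (simp add: pn)
    also have "\<dots> = (\<Sum>(i,j)\<in>{(i,j). i+j < N}. f i * q j)"
      by (rule sum.triangle_reindex[symmetric])
    also have "\<dots> \<le> (\<Sum>(i,j)\<in>{..<N} \<times> {..<N}. f i * q j)"
      by (rule sum_mono2) auto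
    also have "\<dots> = (\<Sum>i<N. f i) * (\<Sum>j<N. q j)"
      by (simp add: sum_product sum.cartesian_product)
    also have "\<dots> \<le> 1 * (\<Sum>j. q j)"
    proof (rule mult_mono)
      have "(\<Sum>i<N. f i) \<le> (\<Sum>i\<le>N. f i)" by (rule sum_mono2) auto
      also have "\<dots> \<le> 1" unfolding f_def by (rule fhit_le1)
      finally show "(\<Sum>i<N. f i) \<le> 1" .
      show "(\<Sum>j<N. q j) \<le> (\<Sum>j. q j)" by (rule sum_le_suminf) auto
    qed auto
    finally show "(\<Sum>n<N. ennreal (pmf (walk_law_from \<xi> 0 n) x)) \<le> (\<Sum>n. ennreal (pmf (walk_law_from \<xi> 0 n) 0))"
      by (simp add: q_def)
  qed
qed



lemma Vbox_mono: "n \<le> m \<Longrightarrow> Vbox n \<subseteq> Vbox m"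
proof -
  assume "n \<le> m"
  then have "(2::int)^n \<le> 2^m" by (rule power_increasing) simp
  then have "\<And>y::int. - (2 ^ n) \<le> y \<and> y < 2 ^ n \<Longrightarrow> - (2 ^ m) \<le> y \<and> y < 2 ^ m" by linarith
  then show ?thesis unfolding Vbox_def by blast
qed

lemma Vbox_sub: "(vec_nth ` (Vbox n :: (int^'d) set)) \<subseteq> (\<Pi>\<^sub>E i\<in>(UNIV::'d set). {-(2^n)..<2^n})"
  unfolding Vbox_def by auto

lemma Vbox_finite: "finite (Vbox n :: (int^'d) set)"
proof -
  have "finite (vec_nth ` (Vbox n :: (int^'d) set))"
    by (rule finite_subset[OF Vbox_sub]) (auto intro: finite_PiE)
  then show ?thesis by (rule finite_imageD) (auto simp: inj_on_def vec_nth_inject)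
qed

lemma Vbox_card: "real (card (Vbox n :: (int^'d) set)) \<le> 2 ^ (CARD('d) * (n+1))"
proof -
  have "card (Vbox n :: (int^'d) set) = card (vec_nth ` (Vbox n :: (int^'d) set))"
    by (rule card_image[symmetric]) (auto simp: inj_on_def vec_nth_inject)
  also have "\<dots> \<le> card (\<Pi>\<^sub>E i\<in>(UNIV::'d set). {-(2^n)..<(2::int)^n})"
    by (rule card_mono[OF _ Vbox_sub]) (auto intro: finite_PiE)
  also have "\<dots> = (2^(n+1)) ^ CARD('d)"
    by (simp add: card_PiE nat_mult_distrib nat_power_eq)
  finally show ?thesis
    by (metis of_nat_le_iff of_nat_numeral of_nat_power power_mult mult.commute)
qed

lemma in_some_Vbox: "\<exists>M. (x::int^'d) \<in> Vbox M"
proof -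
  define s where "s = nat (\<Sum>j\<in>UNIV. \<bar>x$j\<bar>)"
  have "\<bar>x$i\<bar> < 2^s" for i
  proof -
    have "\<bar>x$i\<bar> \<le> (\<Sum>j\<in>UNIV. \<bar>x$j\<bar>)" by (rule member_le_sum) auto
    also have "\<dots> = int s" unfolding s_def by (simp add: sum_nonneg)
    also have "\<dots> < int (2^s)" using less_exp[of s] by linarith
    finally show ?thesis by simp
  qed
  then have "- (2 ^ s) \<le> x $ i \<and> x $ i < 2 ^ s" for i by (smt (verit))
  then have "x \<in> Vbox s" unfolding Vbox_def by blast
  then show ?thesis by blast
qed

lemma finite_in_Vbox: "finite (F::(int^'d) set) \<Longrightarrow> \<exists>M. F \<subseteq> Vbox M"
proof (induction F rule: finite_induct)
  case empty then show ?case by simp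
next
  case (insert x F)
  then obtain M where M: "F \<subseteq> Vbox M" by blast
  obtain M' where M': "x \<in> Vbox M'" using in_some_Vbox by blast
  have "insert x F \<subseteq> Vbox (max M M')"
    using M M' Vbox_mono[of M "max M M'"] Vbox_mono[of M' "max M M'"] by auto
  then show ?case by blast
qed

lemma znorm_upper: fixes x :: "int^'d" assumes x: "x \<in> Vbox n" shows "znorm x \<le> real CARD('d) * 2^n"
proof -
  have "znorm x \<le> (\<Sum>i\<in>UNIV. \<bar>(\<chi> i. real_of_int (x $ i)) $ i\<bar>)"
    unfolding znorm_def by (rule norm_le_l1_cart)
  also have "\<dots> \<le> (\<Sum>i\<in>(UNIV::'d set). 2^n)"
  proof (rule sum_mono)
    fix i
    have "- (2 ^ n) \<le> x $ i \<and> x $ i < 2 ^ n" using x unfolding Vbox_def by blast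
    then have "\<bar>x$i\<bar> \<le> 2^n" by linarith
    then have "real_of_int \<bar>x$i\<bar> \<le> 2^n" by (metis of_int_le_iff of_int_numeral of_int_power)
    then show "\<bar>(\<chi> i. real_of_int (x $ i)) $ i\<bar> \<le> 2^n" by simp
  qed
  finally show ?thesis by simp
qed

lemma znorm_coord: "real_of_int \<bar>x$i\<bar> \<le> znorm x"
  unfolding znorm_def using component_le_norm_cart[of "\<chi> i. real_of_int (x $ i)" i] by simp

lemma znorm_lower:
  assumes "x \<noteq> 0" "x \<in> Vbox M"
  shows "\<exists>m\<le>M. x \<in> Vbox m \<and> 2^m \<le> 2 * znorm (x::int^'d)"
proof -
  define m where "m = (LEAST m. x \<in> Vbox m)"
  have xm: "x \<in> Vbox m" unfolding m_def by (rule LeastI[of _ M]) (rule assms(2))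
  have mM: "m \<le> M" unfolding m_def by (rule Least_le) (rule assms(2))
  have "2^m \<le> 2 * znorm x"
  proof (cases m)
    case 0
    obtain i where "x$i \<noteq> 0" using assms(1) by (metis vec_eq_iff zero_index)
    then have "1 \<le> real_of_int \<bar>x$i\<bar>" by simp
    with znorm_coord[of x i] 0 show ?thesis by simp
  next
    case (Suc k)
    then have "x \<notin> Vbox k" unfolding m_def using not_less_Least by (metis lessI m_def)
    then obtain i where "\<not> (- (2 ^ k) \<le> x $ i \<and> x $ i < 2 ^ k)" unfolding Vbox_def by auto
    then have "2^k \<le> \<bar>x$i\<bar>" by auto
    then have "2^k \<le> real_of_int \<bar>x$i\<bar>" by (metis of_int_le_iff of_int_numeral of_int_power)
    with znorm_coord[of x i] Suc show ?thesis by simp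
  qed
  with xm mM show ?thesis by blast
qed



lemma limsup_le_rate:
  fixes U :: "nat \<Rightarrow> real"
  assumes C: "C \<ge> 1" and U: "\<And>n. 0 < U n \<and> U n \<le> C * 2 powr (c * real n)"
  shows "limsup (\<lambda>n. ereal (log 2 (U n) / real n)) \<le> ereal c"
proof -
  have ev: "eventually (\<lambda>n. ereal (log 2 (U n) / real n) \<le> ereal (c + log 2 C / real n)) sequentially"
    using eventually_ge_at_top[of "1::nat"]
  proof eventually_elim
    case (elim n)
    have "log 2 (U n) \<le> log 2 (C * 2 powr (c * real n))"
      using U[of n] by (intro log_mono) auto
    also have "\<dots> = log 2 C + c * real n"
      using C by (simp add: log_mult)
    finally have "log 2 (U n) / real n \<le> (log 2 C + c * real n) / real n"
      using elim by (intro divide_right_mono) auto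
    also have "\<dots> = c + log 2 C / real n" using elim by (simp add: field_simps)
    finally show ?case by simp
  qed
  have lim: "(\<lambda>n. ereal (c + log 2 C / real n)) \<longlonglongrightarrow> ereal c"
    by (intro tendsto_intros lim_const_over_n[THEN tendsto_add_const_iff[THEN iffD2], simplified]) 
  have "limsup (\<lambda>n. ereal (log 2 (U n) / real n)) \<le> limsup (\<lambda>n. ereal (c + log 2 C / real n))"
    by (rule Limsup_mono[OF ev])
  also have "\<dots> = ereal c" by (rule lim_imp_Limsup[OF _ lim]) simp
  finally show ?thesis .
qed



context
  fixes \<xi> :: "(int ^ 'd) pmf"
  assumes tr: "transient \<xi>"
begin

definition "gr x = enn2real (green \<xi> 0 x)"
definition "Ur n = enn2real (Ufun \<xi> (Vbox n))"

lemma green_fin: "green \<xi> 0 x < top"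
  using tr unfolding transient_def by (simp add: top.not_eq_extremum)

lemma green_eq: "green \<xi> 0 x = ennreal (gr x)"
  unfolding gr_def using green_fin by simp

lemma gr_nonneg: "0 \<le> gr x" unfolding gr_def by simp

lemma gr_le: "gr x \<le> gr 0"
  unfolding gr_def by (rule enn2real_mono[OF green_le_diag green_fin])

lemma gr0_ge1: "1 \<le> gr 0"
proof -
  have "(\<Sum>n<1. ennreal (pmf (walk_law_from \<xi> 0 n) 0)) \<le> green \<xi> 0 0"
    unfolding green_def by (rule sum_le_suminf) auto
  then have "1 \<le> green \<xi> 0 0" by (simp add: wlf_0)
  then show ?thesis by (simp add: green_eq)
qed

lemma Ufun_eq: "Ufun \<xi> (Vbox n) = ennreal (sum gr (Vbox n))"
proof -
  have "Ufun \<xi> (Vbox n) = (\<Sum>x\<in>Vbox n. green \<xi> 0 x)"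
    unfolding Ufun_def by (rule infsum_finite[OF Vbox_finite])
  also have "\<dots> = (\<Sum>x\<in>Vbox n. ennreal (gr x))" by (simp add: green_eq)
  also have "\<dots> = ennreal (sum gr (Vbox n))" by (rule sum_ennreal) (rule gr_nonneg)
  finally show ?thesis .
qed

lemma Ur_eq: "Ur n = sum gr (Vbox n)"
  unfolding Ur_def Ufun_eq by (simp add: sum_nonneg gr_nonneg)

lemma zero_Vbox: "0 \<in> Vbox n" unfolding Vbox_def by simp

lemma Ur_ge: "gr 0 \<le> Ur n"
  unfolding Ur_eq by (rule member_le_sum) (auto simp: gr_nonneg zero_Vbox Vbox_finite)

lemma Ur_le: "Ur n \<le> (gr 0 * 2 ^ CARD('d)) * 2 powr (real CARD('d) * real n)"
proof -
  have "Ur n \<le> (\<Sum>x\<in>(Vbox n::(int^'d) set). gr 0)" unfolding Ur_eq using gr_le by (intro sum_mono) auto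
  also have "\<dots> = real (card (Vbox n :: (int^'d) set)) * gr 0" by simp
  also have "\<dots> \<le> 2 ^ (CARD('d) * (n+1)) * gr 0"
    by (rule mult_right_mono[OF Vbox_card]) (use gr0_ge1 in simp)
  also have "\<dots> = (gr 0 * 2 ^ CARD('d)) * 2 powr (real CARD('d) * real n)"
    by (simp add: powr_realpow[symmetric] powr_add[symmetric] algebra_simps)
  finally show ?thesis .
qed

definition "LL = limsup (\<lambda>n. ereal (log 2 (Ur n) / real n))"

lemma LL_le: "LL \<le> ereal (real CARD('d))"
  unfolding LL_def
  by (rule limsup_le_rate[where C="gr 0 * 2 ^ CARD('d)"])
     (use gr0_ge1 Ur_ge Ur_le in \<open>auto intro: order.trans[of 1 "gr 0"] simp: less_le_trans[OF _ Ur_ge]\<close>)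

lemma LL_ge: "0 \<le> LL"
  unfolding LL_def
proof (rule le_Limsup, simp, rule always_eventually, rule allI)
  fix n
  have "1 \<le> Ur n" using gr0_ge1 Ur_ge[of n] by linarith
  then show "0 \<le> ereal (log 2 (Ur n) / real n)" by simp
qed

definition "SS \<gamma> = (\<Sum>\<^sub>\<infinity>x\<in>UNIV - {0}. green \<xi> 0 x * ennreal (znorm x powr (- \<gamma>)))"
definition "hh \<gamma> x = gr x * znorm x powr (- \<gamma>)"

lemma hh_nonneg: "0 \<le> hh \<gamma> x" unfolding hh_def by (simp add: gr_nonneg)

lemma SS_eq: "SS \<gamma> = (\<Sum>\<^sub>\<infinity>x\<in>UNIV - {0}. ennreal (hh \<gamma> x))"
  unfolding SS_def hh_def by (simp add: green_eq ennreal_mult gr_nonneg)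

lemma SS_finite_sum:
  assumes "finite F" "F \<subseteq> UNIV - {0}"
  shows "ennreal (sum (hh \<gamma>) F) \<le> SS \<gamma>"
proof -
  have "ennreal (sum (hh \<gamma>) F) = (\<Sum>x\<in>F. ennreal (hh \<gamma> x))"
    by (rule sum_ennreal[symmetric]) (rule hh_nonneg)
  also have "\<dots> = (\<Sum>\<^sub>\<infinity>x\<in>F. ennreal (hh \<gamma> x))" using assms(1) by simp
  also have "\<dots> \<le> (\<Sum>\<^sub>\<infinity>x\<in>UNIV - {0}. ennreal (hh \<gamma> x))"
    by (rule infsum_mono_neutral) (use assms(2) in \<open>auto intro: nonneg_summable_on_complete\<close>)
  finally show ?thesis unfolding SS_eq .
qed

lemma znorm_pos: "x \<noteq> 0 \<Longrightarrow> 0 < znorm (x::int^'d)"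
  using znorm_lower[of x] in_some_Vbox[of x]
  by (smt (verit, best) two_realpow_ge_one)

lemma D2:
  assumes g: "0 \<le> \<gamma>" and fin: "SS \<gamma> < top"
  shows "LL \<le> ereal \<gamma>"
proof -
  define Sr where "Sr = enn2real (SS \<gamma>)"
  have Sr0: "0 \<le> Sr" unfolding Sr_def by simp
  define d where "d = real CARD('d)"
  have d1: "1 \<le> d" unfolding d_def by simp
  have bnd: "Ur n \<le> (gr 0 + Sr * d powr \<gamma>) * 2 powr (\<gamma> * real n)" for n
  proof -
    define B where "B = (d * 2^n) powr \<gamma>"
    have hs: "sum (hh \<gamma>) (Vbox n - {0}) \<le> Sr"
    proof -
      have "ennreal (sum (hh \<gamma>) (Vbox n - {0})) \<le> SS \<gamma>"
        by (rule SS_finite_sum) (auto simp: Vbox_finite)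
      also have "\<dots> = ennreal Sr" unfolding Sr_def using fin by simp
      finally show ?thesis using Sr0 by simp
    qed
    have pt: "gr x \<le> hh \<gamma> x * B" if x: "x \<in> Vbox n - {0}" for x
    proof -
      have zp: "0 < znorm x" using x znorm_pos by auto
      have "gr x = gr x * (znorm x powr (- \<gamma>) * znorm x powr \<gamma>)"
        using zp by (simp add: powr_add[symmetric])
      also have "\<dots> = hh \<gamma> x * znorm x powr \<gamma>" unfolding hh_def by simp
      also have "\<dots> \<le> hh \<gamma> x * B" unfolding B_def
        using x g zp znorm_upper[of x n] d_def
        by (intro mult_left_mono hh_nonneg powr_mono2) auto
      finally show ?thesis .
    qed
    have "Ur n = gr 0 + sum gr (Vbox n - {0})"
      unfolding Ur_eq by (rule sum.remove) (auto simp: Vbox_finite zero_Vbox)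
    also have "sum gr (Vbox n - {0}) \<le> sum (\<lambda>x. hh \<gamma> x * B) (Vbox n - {0})"
      by (rule sum_mono) (rule pt)
    also have "\<dots> = sum (hh \<gamma>) (Vbox n - {0}) * B" by (simp add: sum_distrib_right)
    also have "\<dots> \<le> Sr * B" using hs unfolding B_def by (intro mult_right_mono) auto
    also have "B = d powr \<gamma> * 2 powr (\<gamma> * real n)"
      unfolding B_def using d1 by (simp add: powr_mult powr_realpow[symmetric] powr_powr mult.commute)
    finally have "Ur n \<le> gr 0 + Sr * d powr \<gamma> * 2 powr (\<gamma> * real n)" by (simp add: mult.assoc)
    also have "\<dots> \<le> gr 0 * 2 powr (\<gamma> * real n) + Sr * d powr \<gamma> * 2 powr (\<gamma> * real n)"
      using g gr0_ge1 by (intro add_right_mono) (simp add: ge_one_powr_ge_zero)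
    finally show ?thesis by (simp add: algebra_simps)
  qed
  show ?thesis unfolding LL_def
    by (rule limsup_le_rate[where C="gr 0 + Sr * d powr \<gamma>"]) (use bnd gr0_ge1 Ur_ge Sr0 in \<open>auto intro: add_increasing2 less_le_trans[OF _ Ur_ge]\<close>)
qed

lemma LL_real: "LL = ereal (real_of_ereal LL)"
  using LL_ge LL_le by (cases LL) auto

lemma inner_bound:
  assumes "0 \<le> w" and finA: "finite A"
  shows "(\<Sum>x\<in>A. if x \<in> Vbox n then w * gr x else 0) \<le> w * Ur n"
proof -
  have "(\<Sum>x\<in>A. if x \<in> Vbox n then w * gr x else 0) = (\<Sum>x\<in>A \<inter> Vbox n. w * gr x)"
    by (simp add: sum.inter_restrict finA)
  also have "\<dots> \<le> (\<Sum>x\<in>Vbox n. w * gr x)"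
    by (rule sum_mono2) (auto simp: Vbox_finite assms gr_nonneg)
  also have "\<dots> = w * Ur n" by (simp add: Ur_eq sum_distrib_left)
  finally show ?thesis .
qed

lemma pt_bound:
  assumes g: "0 < \<gamma>" and x: "x \<in> Vbox M - {0}"
  shows "hh \<gamma> x \<le> 2 powr \<gamma> * (\<Sum>n\<le>M. if x \<in> Vbox n then 2 powr (-(\<gamma> * real n)) * gr x else 0)"
proof -
  obtain m where m: "m \<le> M" "x \<in> Vbox m" "2^m \<le> 2 * znorm x"
    using znorm_lower[of x M] x by auto
  have pos: "0 < (2::real)^m / 2" by simp
  have "znorm x powr (-\<gamma>) \<le> ((2::real)^m / 2) powr (-\<gamma>)"
    using m(3) g by (intro powr_mono2' pos) auto
  also have "(2::real)^m / 2 = 2 powr (real m - 1)"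
    by (simp add: powr_diff powr_realpow)
  also have "(2 powr (real m - 1)) powr (-\<gamma>) = 2 powr \<gamma> * 2 powr (-(\<gamma> * real m))"
    by (simp add: powr_powr powr_add[symmetric] algebra_simps)
  finally have "hh \<gamma> x \<le> 2 powr \<gamma> * (2 powr (-(\<gamma> * real m)) * gr x)"
    unfolding hh_def using gr_nonneg[of x] by (simp add: mult_left_mono algebra_simps)
  also have "2 powr (-(\<gamma> * real m)) * gr x \<le> (\<Sum>n\<le>M. if x \<in> Vbox n then 2 powr (-(\<gamma> * real n)) * gr x else 0)"
    using member_le_sum[of m "{..M}" "\<lambda>n. if x \<in> Vbox n then 2 powr (-(\<gamma> * real n)) * gr x else 0"] m
    by (simp add: gr_nonneg)
  finally show ?thesis by simp
qed

lemma D1: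
  assumes g: "0 < \<gamma>" and lt: "LL < ereal \<gamma>"
  shows "SS \<gamma> < top"
proof -
  define l where "l = real_of_ereal LL"
  have Ll: "LL = ereal l" unfolding l_def by (rule LL_real)
  have l0: "0 \<le> l" using LL_ge Ll by simp
  have lg: "l < \<gamma>" using lt Ll by simp
  define \<beta> where "\<beta> = (l + \<gamma>) / 2"
  have b0: "0 < \<beta>" "\<beta> < \<gamma>" "LL < ereal \<beta>" using l0 lg g Ll unfolding \<beta>_def by auto
  have "eventually (\<lambda>n. ereal (log 2 (Ur n) / real n) < ereal \<beta>) sequentially"
    using Limsup_lessD[OF b0(3)[unfolded LL_def]] .
  then obtain N where N: "\<And>n. n \<ge> N \<Longrightarrow> log 2 (Ur n) / real n < \<beta>"
    by (auto simp: eventually_sequentially)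
  have Urpos: "0 < Ur n" for n using gr0_ge1 Ur_ge[of n] by linarith
  define C where "C = 1 + (\<Sum>n<Suc N. Ur n)"
  have C1: "1 \<le> C" unfolding C_def using Urpos by (simp add: sum_nonneg less_imp_le)
  have UC: "Ur n \<le> C * 2 powr (\<beta> * real n)" for n
  proof (cases "n \<le> N")
    case True
    have "Ur n \<le> (\<Sum>n<Suc N. Ur n)"
      by (rule member_le_sum) (use True Urpos in \<open>auto intro: less_imp_le\<close>)
    also have "\<dots> \<le> C" unfolding C_def by simp
    also have "\<dots> \<le> C * 2 powr (\<beta> * real n)"
      using C1 b0 by (intro mult_le_cancel_left1[THEN iffD2] disjI1) (auto simp: ge_one_powr_ge_zero)
    finally show ?thesis .
  next
    case False
    then have n1: "1 \<le> n" "N \<le> n" by auto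
    have "log 2 (Ur n) / real n < \<beta>" using N n1 by auto
    then have "log 2 (Ur n) < \<beta> * real n" using n1 by (simp add: divide_less_eq)
    then have "Ur n < 2 powr (\<beta> * real n)"
    proof -
      have "2 powr (log 2 (Ur n)) < 2 powr (\<beta> * real n)"
        by (rule powr_less_mono) (use \<open>log 2 (Ur n) < \<beta> * real n\<close> in auto)
      then show ?thesis using Urpos[of n] by simp
    qed
    also have "\<dots> \<le> C * 2 powr (\<beta> * real n)" using C1 by simp
    finally show ?thesis by simp
  qed
  define r where "r = 2 powr (\<beta> - \<gamma>)"
  have r: "0 < r" "r < 1" unfolding r_def using b0 powr_less_mono[of "\<beta>-\<gamma>" 0 2] by auto
  define B where "B = 2 powr \<gamma> * (C / (1 - r))"
  have "SS \<gamma> \<le> ennreal B"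
    unfolding SS_eq
  proof (rule infsum_le_finite_sums)
    show "(\<lambda>x. ennreal (hh \<gamma> x)) summable_on UNIV - {0}" by (rule nonneg_summable_on_complete) simp
    fix F :: "(int^'d) set" assume F: "finite F" "F \<subseteq> UNIV - {0}"
    obtain M where M: "F \<subseteq> Vbox M" using finite_in_Vbox[OF F(1)] by blast
    define A :: "(int^'d) set" where "A = Vbox M - {0}"
    have "sum (hh \<gamma>) F \<le> sum (hh \<gamma>) A"
      by (rule sum_mono2) (use F M in \<open>auto simp: A_def Vbox_finite hh_nonneg\<close>)
    also have "\<dots> \<le> (\<Sum>x\<in>A. 2 powr \<gamma> * (\<Sum>n\<le>M. if x \<in> Vbox n then 2 powr (-(\<gamma> * real n)) * gr x else 0))"
      by (rule sum_mono) (use pt_bound[OF g] in \<open>auto simp: A_def\<close>)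
    also have "\<dots> = 2 powr \<gamma> * (\<Sum>n\<le>M. \<Sum>x\<in>A. if x \<in> Vbox n then 2 powr (-(\<gamma> * real n)) * gr x else 0)"
      by (simp add: sum_distrib_left[symmetric] sum.swap[of _ A])
    also have "\<dots> \<le> 2 powr \<gamma> * (\<Sum>n\<le>M. 2 powr (-(\<gamma> * real n)) * Ur n)"
      by (intro mult_left_mono sum_mono inner_bound) (auto simp: A_def Vbox_finite)
    also have "\<dots> \<le> 2 powr \<gamma> * (\<Sum>n\<le>M. C * r ^ n)"
    proof (intro mult_left_mono sum_mono)
      fix n
      have "2 powr (-(\<gamma> * real n)) * Ur n \<le> 2 powr (-(\<gamma> * real n)) * (C * 2 powr (\<beta> * real n))"
        by (intro mult_left_mono UC) auto
      also have "\<dots> = C * r ^ n"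
        unfolding r_def by (simp add: powr_power powr_add[symmetric] algebra_simps)
      finally show "2 powr (-(\<gamma> * real n)) * Ur n \<le> C * r ^ n" .
    qed auto
    also have "(\<Sum>n\<le>M. C * r ^ n) \<le> C / (1 - r)"
    proof -
      have "(\<Sum>n\<le>M. r ^ n) = (\<Sum>n<Suc M. r ^ n)" by (simp add: lessThan_Suc_atMost)
      also have "\<dots> \<le> (\<Sum>n. r ^ n)"
        by (rule sum_le_suminf) (use r in \<open>auto intro: summable_geometric\<close>)
      also have "\<dots> = 1 / (1 - r)" by (rule suminf_geometric) (use r in auto)
      finally have "(\<Sum>n\<le>M. r ^ n) \<le> 1 / (1 - r)" .
      then have "C * (\<Sum>n\<le>M. r ^ n) \<le> C * (1 / (1 - r))" using C1 by (intro mult_left_mono) auto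
      then show ?thesis by (simp add: sum_distrib_left)
    qed
    finally have "sum (hh \<gamma>) F \<le> B" unfolding B_def by (simp add: mult_left_mono)
    then show "(\<Sum>x\<in>F. ennreal (hh \<gamma> x)) \<le> ennreal B"
      by (simp add: hh_nonneg ennreal_leI)
  qed
  then show ?thesis using ennreal_less_top order.strict_trans1 by blast
qed

lemma main_eq: "ereal (gamma_c \<xi>) = LL"
proof -
  define d where "d = real CARD('d)"
  define T where "T = {\<gamma> \<in> {0<..<d}. SS \<gamma> < \<infinity>}"
  have gc: "gamma_c \<xi> = (if T = {} then d else Inf T)"
    unfolding gamma_c_def T_def SS_def d_def Let_def ..
  define l where "l = real_of_ereal LL"
  have Ll: "LL = ereal l" unfolding l_def by (rule LL_real)
  have l0: "0 \<le> l" using LL_ge Ll by simp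
  have ld: "l \<le> d" using LL_le Ll d_def by simp
  have d1: "1 \<le> d" unfolding d_def by simp
  have i: "l \<le> \<gamma>" if "\<gamma> \<in> T" for \<gamma>
    using D2[of \<gamma>] that Ll unfolding T_def by auto
  have ii: "\<gamma> \<in> T" if "0 < \<gamma>" "\<gamma> < d" "l < \<gamma>" for \<gamma>
    using D1[of \<gamma>] that Ll unfolding T_def by auto
  show ?thesis
  proof (cases "T = {}")
    case True
    have "l = d"
    proof (rule ccontr)
      assume "l \<noteq> d"
      then have "l < d" using ld by simp
      then have "(l + d) / 2 \<in> T" using l0 by (intro ii) auto
      then show False using True by simp
    qed
    then show ?thesis using gc True Ll by simp
  next
    case False
    have bdd: "bdd_below T" unfolding T_def by (rule bdd_belowI[of _ 0]) auto
    have ld': "l < d"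
    proof -
      obtain t where "t \<in> T" using False by blast
      then have "l \<le> t" "t < d" using i unfolding T_def by auto
      then show ?thesis by simp
    qed
    have ge: "l \<le> Inf T" by (rule cInf_greatest[OF False]) (rule i)
    have le: "Inf T \<le> l"
    proof (rule ccontr)
      assume "\<not> Inf T \<le> l"
      then have lt: "l < Inf T" by simp
      define t where "t = (l + min (Inf T) d) / 2"
      have "t \<in> T" using lt ld' l0 unfolding t_def by (intro ii) auto
      then have "Inf T \<le> t" by (rule cInf_lower[OF _ bdd])
      then show False using lt ld' unfolding t_def by simp
    qed
    show ?thesis using gc False Ll ge le by simp
  qed
qed

end

theorem proposition6p3:
  fixes \<xi> :: "(int ^ 'd) pmf"
  assumes "transient \<xi>"
  shows "ereal (gamma_c \<xi>)
           = limsup (\<lambda>n. ereal (log 2 (enn2real (Ufun \<xi> (Vbox n))) / real n))"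
  using main_eq[OF assms] unfolding LL_def[OF assms] Ur_def[OF assms] .

end
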